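(* Assume every $(\sigma,\delta)$-conjugacy class of $K$ is $(\sigma,\delta)$-algebraic. Then for every irreducible $P(T)\in K[T;\sigma,\delta]$ of degree $>1$, the skew rational function $P(T)^{-1}$ is defined at every $a\in K$.
   Context: Let $K$ be a skew field, $K^*=K\setminus\{0\}$, $\sigma\colon K\to K$ a ring endomorphism and $\delta\colon K\to K$ a $\sigma$-derivation. $K[T;\sigma,\delta]$ is the skew polynomial ring with $Ta=\sigma(a)T+\delta(a)$. The $(\sigma,\delta)$-action of $K^*$ on $K$ is ${}^{b}a=\sigma(b)ab^{-1}+\delta(b)b^{-1}$; $\Delta(a)=\{{}^{b}a:b\in K^*\}$ is the $(\sigma,\delta)$-conjugacy class of $a$. For $P\in K[T;\sigma,\delta]$ and $a\in K$, $P(a)$ is the unique element of $K$ with $P(T)-P(a)\in K[T;\sigma,\delta](T-a)$. A conjugacy class $\Delta(a)$ is $(\sigma,\delta)$-algebraic if there is a nonzero $P\in K[T;\sigma,\delta]$ with $P(c)=0$ for all $c\in\Delta(a)$. For a set $Z$ with a $K^*$-action, the skew product of functions $Z\to K$ is $(f\diamond g)(z)=f({}^{g(z)}z)g(z)$ if $g(z)\neq0$, $0$ otherwise; $f$ is skew invertible if some $g$ satisfies $f\diamond g=g\diamond f=1$. $K(T;\sigma,\delta)$ is the division ring of left fractions of $K[T;\sigma,\delta]$; each $f$ has a unique minimal representation $P(T)^{-1}Q(T)$ with $P$ monic of least degree; $f$ is defined at $a$ if the function $\Delta(a)\to K$, $c\mapsto P(c)$, is skew invertible. *)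

theory Defs
  imports "HOL-Computational_Algebra.Polynomial"
begin

text \<open>Skew polynomials K[T;sigma,delta] over a skew field K (type class division_ring)
are represented by their coefficient sequences, stored in the library type 'a poly
(used only as a container of coefficients; the library product on 'a poly is NOT used).
The skew multiplication is defined from the rule T a = sigma(a) T + delta(a).\<close>

definition ring_endo :: "('a::division_ring \<Rightarrow> 'a) \<Rightarrow> bool" where
  "ring_endo \<sigma> \<longleftrightarrow> (\<forall>a b. \<sigma> (a + b) = \<sigma> a + \<sigma> b) \<and> (\<forall>a b. \<sigma> (a * b) = \<sigma> a * \<sigma> b) \<and> \<sigma> 1 = 1"

definition sigma_derivation :: "('a::division_ring \<Rightarrow> 'a) \<Rightarrow> ('a \<Rightarrow> 'a) \<Rightarrow> bool" where
  "sigma_derivation \<sigma> \<delta> \<longleftrightarrow> (\<forall>a b. \<delta> (a + b) = \<delta> a + \<delta> b) \<and>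
      (\<forall>a b. \<delta> (a * b) = \<sigma> a * \<delta> b + \<delta> a * b)"

text \<open>Left multiplication by T: T (sum a_i T^i) = sum (sigma(a_i) T^(i+1) + delta(a_i) T^i).\<close>
definition tmul :: "('a::division_ring \<Rightarrow> 'a) \<Rightarrow> ('a \<Rightarrow> 'a) \<Rightarrow> 'a poly \<Rightarrow> 'a poly" where
  "tmul \<sigma> \<delta> p = pCons 0 (map_poly \<sigma> p) + map_poly \<delta> p"

definition lscal :: "'a::division_ring \<Rightarrow> 'a poly \<Rightarrow> 'a poly" where
  "lscal c p = map_poly (\<lambda>x. c * x) p"

definition skew_mult :: "('a::division_ring \<Rightarrow> 'a) \<Rightarrow> ('a \<Rightarrow> 'a) \<Rightarrow> 'a poly \<Rightarrow> 'a poly \<Rightarrow> 'a poly" where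
  "skew_mult \<sigma> \<delta> p q = (\<Sum>i\<le>degree p. lscal (coeff p i) ((tmul \<sigma> \<delta> ^^ i) q))"

definition skew_eval :: "('a::division_ring \<Rightarrow> 'a) \<Rightarrow> ('a \<Rightarrow> 'a) \<Rightarrow> 'a poly \<Rightarrow> 'a \<Rightarrow> 'a" where
  "skew_eval \<sigma> \<delta> P a = (THE r. \<exists>Q. P - [:r:] = skew_mult \<sigma> \<delta> Q [:- a, 1:])"

definition skew_unit :: "('a::division_ring \<Rightarrow> 'a) \<Rightarrow> ('a \<Rightarrow> 'a) \<Rightarrow> 'a poly \<Rightarrow> bool" where
  "skew_unit \<sigma> \<delta> A \<longleftrightarrow> (\<exists>B. skew_mult \<sigma> \<delta> A B = [:1:] \<and> skew_mult \<sigma> \<delta> B A = [:1:])"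

definition skew_irreducible :: "('a::division_ring \<Rightarrow> 'a) \<Rightarrow> ('a \<Rightarrow> 'a) \<Rightarrow> 'a poly \<Rightarrow> bool" where
  "skew_irreducible \<sigma> \<delta> P \<longleftrightarrow> P \<noteq> 0 \<and> \<not> skew_unit \<sigma> \<delta> P \<and>
     (\<forall>A B. P = skew_mult \<sigma> \<delta> A B \<longrightarrow> skew_unit \<sigma> \<delta> A \<or> skew_unit \<sigma> \<delta> B)"

definition sd_act :: "('a::division_ring \<Rightarrow> 'a) \<Rightarrow> ('a \<Rightarrow> 'a) \<Rightarrow> 'a \<Rightarrow> 'a \<Rightarrow> 'a" where
  "sd_act \<sigma> \<delta> b a = \<sigma> b * a * inverse b + \<delta> b * inverse b"

definition conj_class :: "('a::division_ring \<Rightarrow> 'a) \<Rightarrow> ('a \<Rightarrow> 'a) \<Rightarrow> 'a \<Rightarrow> 'a set" where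
  "conj_class \<sigma> \<delta> a = {sd_act \<sigma> \<delta> b a | b. b \<noteq> 0}"

definition sd_algebraic_class :: "('a::division_ring \<Rightarrow> 'a) \<Rightarrow> ('a \<Rightarrow> 'a) \<Rightarrow> 'a \<Rightarrow> bool" where
  "sd_algebraic_class \<sigma> \<delta> a \<longleftrightarrow>
     (\<exists>P. P \<noteq> 0 \<and> (\<forall>c\<in>conj_class \<sigma> \<delta> a. skew_eval \<sigma> \<delta> P c = 0))"

text \<open>Skew product of functions Z -> K (values outside Z irrelevant), and skew invertibility on Z.\<close>
definition skew_prod :: "('a::division_ring \<Rightarrow> 'a) \<Rightarrow> ('a \<Rightarrow> 'a) \<Rightarrow> ('a \<Rightarrow> 'a) \<Rightarrow> ('a \<Rightarrow> 'a) \<Rightarrow> 'a \<Rightarrow> 'a" where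
  "skew_prod \<sigma> \<delta> f g z = (if g z \<noteq> 0 then f (sd_act \<sigma> \<delta> (g z) z) * g z else 0)"

definition skew_invertible_on :: "('a::division_ring \<Rightarrow> 'a) \<Rightarrow> ('a \<Rightarrow> 'a) \<Rightarrow> 'a set \<Rightarrow> ('a \<Rightarrow> 'a) \<Rightarrow> bool" where
  "skew_invertible_on \<sigma> \<delta> Z f \<longleftrightarrow>
     (\<exists>g. \<forall>z\<in>Z. skew_prod \<sigma> \<delta> f g z = 1 \<and> skew_prod \<sigma> \<delta> g f z = 1)"

text \<open>Equality of left fractions P^{-1}Q = R^{-1}S in K(T;sigma,delta) (left Ore localisation):
there are nonzero U, V with U P = V R and U Q = V S.\<close>
definition frac_eq :: "('a::division_ring \<Rightarrow> 'a) \<Rightarrow> ('a \<Rightarrow> 'a) \<Rightarrow> 'a poly \<times> 'a poly \<Rightarrow> 'a poly \<times> 'a poly \<Rightarrow> bool" where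
  "frac_eq \<sigma> \<delta> PQ RS \<longleftrightarrow> (\<exists>U V. U \<noteq> 0 \<and> V \<noteq> 0 \<and>
      skew_mult \<sigma> \<delta> U (fst PQ) = skew_mult \<sigma> \<delta> V (fst RS) \<and>
      skew_mult \<sigma> \<delta> U (snd PQ) = skew_mult \<sigma> \<delta> V (snd RS))"

definition minimal_rep :: "('a::division_ring \<Rightarrow> 'a) \<Rightarrow> ('a \<Rightarrow> 'a) \<Rightarrow> 'a poly \<times> 'a poly \<Rightarrow> 'a poly \<times> 'a poly \<Rightarrow> bool" where
  "minimal_rep \<sigma> \<delta> PQ RS \<longleftrightarrow> lead_coeff (fst RS) = 1 \<and> frac_eq \<sigma> \<delta> RS PQ \<and>
     (\<forall>R' S'. lead_coeff R' = 1 \<and> frac_eq \<sigma> \<delta> (R', S') PQ \<longrightarrow> degree (fst RS) \<le> degree R')"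

definition frac_defined_at :: "('a::division_ring \<Rightarrow> 'a) \<Rightarrow> ('a \<Rightarrow> 'a) \<Rightarrow> 'a poly \<times> 'a poly \<Rightarrow> 'a \<Rightarrow> bool" where
  "frac_defined_at \<sigma> \<delta> PQ a \<longleftrightarrow> (\<exists>RS. minimal_rep \<sigma> \<delta> PQ RS) \<and>
     (\<forall>RS. minimal_rep \<sigma> \<delta> PQ RS \<longrightarrow>
        skew_invertible_on \<sigma> \<delta> (conj_class \<sigma> \<delta> a) (\<lambda>c. skew_eval \<sigma> \<delta> (fst RS) c))"

end

theory Submission
  imports Defs
begin

locale skewctx =
  fixes \<sigma> \<delta> :: "'a::division_ring \<Rightarrow> 'a"
  assumes endo: "ring_endo \<sigma>" and der: "sigma_derivation \<sigma> \<delta>"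
begin

lemma s_add: "\<sigma> (x + y) = \<sigma> x + \<sigma> y" using endo unfolding ring_endo_def by blast
lemma s_mult: "\<sigma> (x * y) = \<sigma> x * \<sigma> y" using endo unfolding ring_endo_def by blast
lemma s_one[simp]: "\<sigma> 1 = 1" using endo unfolding ring_endo_def by blast
lemma s_zero[simp]: "\<sigma> 0 = 0" using s_add[of 0 0] by simp
lemma s_neg: "\<sigma> (- x) = - \<sigma> x"
  using s_add[of x "-x"] by (metis minus_unique right_minus s_zero)
lemma s_diff: "\<sigma> (x - y) = \<sigma> x - \<sigma> y"
  using s_add[of x "-y"] s_neg[of y] by simp
lemma s_inj0: "\<sigma> x = 0 \<Longrightarrow> x = 0"
  by (metis s_mult s_one right_inverse mult_zero_left zero_neq_one)
lemma d_add: "\<delta> (x + y) = \<delta> x + \<delta> y" using der unfolding sigma_derivation_def by blast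
lemma d_mult: "\<delta> (x * y) = \<sigma> x * \<delta> y + \<delta> x * y" using der unfolding sigma_derivation_def by blast
lemma d_zero[simp]: "\<delta> 0 = 0" using d_add[of 0 0] by simp
lemma d_neg: "\<delta> (- x) = - \<delta> x"
  using d_add[of x "-x"] by (metis minus_unique right_minus d_zero)
lemma d_diff: "\<delta> (x - y) = \<delta> x - \<delta> y"
  using d_add[of x "-y"] d_neg[of y] by simp
lemma d_one[simp]: "\<delta> 1 = 0" using d_mult[of 1 1] by simp

lemma s_pow_inj0: "(\<sigma>^^n) x = 0 \<Longrightarrow> x = 0"
  by (induction n) (auto dest: s_inj0)

abbreviation "TM \<equiv> tmul \<sigma> \<delta>"
abbreviation "SM \<equiv> skew_mult \<sigma> \<delta>"

lemma coeff_tmul: "coeff (TM p) n = (if n = 0 then 0 else \<sigma> (coeff p (n - 1))) + \<delta> (coeff p n)"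
  unfolding tmul_def by (simp add: coeff_map_poly coeff_pCons')

lemma coeff_lscal[simp]: "coeff (lscal c p) n = c * coeff p n"
  unfolding lscal_def by (simp add: coeff_map_poly)

lemma lscal_0[simp]: "lscal 0 p = 0" by (rule poly_eqI) simp
lemma lscal_1[simp]: "lscal 1 p = p" by (rule poly_eqI) simp
lemma lscal_p0[simp]: "lscal c 0 = 0" by (rule poly_eqI) simp
lemma lscal_add: "lscal c (p + q) = lscal c p + lscal c q" by (rule poly_eqI) (simp add: distrib_left)
lemma lscal_add2: "lscal (c + d) p = lscal c p + lscal d p" by (rule poly_eqI) (simp add: distrib_right)
lemma lscal_mult: "lscal (c * d) p = lscal c (lscal d p)" by (rule poly_eqI) (simp add: mult.assoc)
lemma lscal_sum: "lscal c (sum f A) = (\<Sum>x\<in>A. lscal c (f x))"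
  by (rule poly_eqI) (simp add: coeff_sum sum_distrib_left)
lemma lscal_const: "lscal c [:x:] = [:c * x:]" by (rule poly_eqI) (simp add: coeff_pCons')
lemma degree_lscal: "degree (lscal c p) \<le> degree p"
  by (rule degree_le) (simp add: coeff_eq_0)

lemma tmul_0[simp]: "TM 0 = 0" unfolding tmul_def by simp
lemma tmul_add: "TM (p + q) = TM p + TM q"
  by (rule poly_eqI) (simp add: coeff_tmul s_add d_add algebra_simps)
lemma tmul_lscal: "TM (lscal c p) = lscal (\<sigma> c) (TM p) + lscal (\<delta> c) p"
  by (rule poly_eqI) (simp add: coeff_tmul s_mult d_mult algebra_simps)
lemma tmul_sum: "TM (sum f A) = (\<Sum>x\<in>A. TM (f x))"
  by (induction A rule: infinite_finite_induct) (simp_all add: tmul_add)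
lemma tmul_const: "TM [:r:] = [:\<delta> r, \<sigma> r:]"
  by (rule poly_eqI) (simp add: coeff_tmul coeff_pCons')
lemma degree_tmul: "degree (TM p) \<le> degree p + 1"
  by (rule degree_le) (simp add: coeff_tmul coeff_eq_0)
lemma coeff_tmul_top: "coeff (TM p) (degree p + 1) = \<sigma> (lead_coeff p)"
  by (simp add: coeff_tmul coeff_eq_0)

lemma tmul_pow_add: "(TM^^i) (p + q) = (TM^^i) p + (TM^^i) q"
  by (induction i) (simp_all add: tmul_add)
lemma tmul_pow_0[simp]: "(TM^^i) 0 = 0"
  by (induction i) simp_all
lemma tmul_pow_sum: "(TM^^i) (sum f A) = (\<Sum>x\<in>A. (TM^^i) (f x))"
  by (induction A rule: infinite_finite_induct) (simp_all add: tmul_pow_add)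

lemma degree_tmul_pow: "degree ((TM^^i) p) \<le> degree p + i"
proof (induction i)
  case (Suc i) then show ?case using degree_tmul[of "(TM^^i) p"] by simp
qed simp

lemma coeff_tmul_pow_top: "coeff ((TM^^i) p) (degree p + i) = (\<sigma>^^i) (lead_coeff p)"
proof (induction i)
  case (Suc i)
  have "coeff ((TM^^Suc i) p) (degree p + Suc i) = \<sigma> (coeff ((TM^^i) p) (degree p + i)) + \<delta> (coeff ((TM^^i) p) (degree p + Suc i))"
    by (simp add: coeff_tmul)
  also have "coeff ((TM^^i) p) (degree p + Suc i) = 0"
    using degree_tmul_pow[of i p] by (intro coeff_eq_0) simp
  finally show ?case using Suc by simp
qed simp

lemma sum_bound:
  assumes "\<And>i. i > degree p \<Longrightarrow> f i = 0" "degree p \<le> N"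
  shows "(\<Sum>i\<le>N. f i) = (\<Sum>i\<le>degree p. f i)"
  by (rule sum.mono_neutral_right) (use assms in auto)

lemma SM_bound: "degree p \<le> N \<Longrightarrow> SM p q = (\<Sum>i\<le>N. lscal (coeff p i) ((TM^^i) q))"
  unfolding skew_mult_def by (rule sym, rule sum_bound) (auto simp: coeff_eq_0)

lemma SM_0_left[simp]: "SM 0 q = 0" unfolding skew_mult_def by simp

lemma SM_add_left: "SM (p + q) r = SM p r + SM q r"
proof -
  let ?N = "max (degree p) (degree q)"
  have "degree (p + q) \<le> ?N" by (rule degree_add_le_max)
  then have "SM (p + q) r = (\<Sum>i\<le>?N. lscal (coeff (p + q) i) ((TM^^i) r))" by (rule SM_bound)
  also have "\<dots> = (\<Sum>i\<le>?N. lscal (coeff p i) ((TM^^i) r)) + (\<Sum>i\<le>?N. lscal (coeff q i) ((TM^^i) r))"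
    by (simp add: lscal_add2 sum.distrib)
  also have "\<dots> = SM p r + SM q r"
    using SM_bound[of p ?N r] SM_bound[of q ?N r] by simp
  finally show ?thesis .
qed

lemma SM_lscal_left: "SM (lscal c p) r = lscal c (SM p r)"
proof -
  have "SM (lscal c p) r = (\<Sum>i\<le>degree p. lscal (coeff (lscal c p) i) ((TM^^i) r))"
    by (rule SM_bound) (rule degree_lscal)
  also have "\<dots> = lscal c (SM p r)"
    by (simp add: skew_mult_def lscal_sum lscal_mult)
  finally show ?thesis .
qed

lemma SM_sum_left: "SM (sum f A) r = (\<Sum>x\<in>A. SM (f x) r)"
  by (induction A rule: infinite_finite_induct) (simp_all add: SM_add_left)

lemma SM_neg_left: "SM (- p) r = - SM p r"
  using SM_add_left[of p "-p" r] by (metis minus_unique right_minus SM_0_left)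

lemma SM_diff_left: "SM (p - q) r = SM p r - SM q r"
  using SM_add_left[of p "-q" r] SM_neg_left[of q r] by simp

lemma SM_add_right: "SM p (q + r) = SM p q + SM p r"
  unfolding skew_mult_def by (simp add: tmul_pow_add lscal_add sum.distrib)

lemma SM_0_right[simp]: "SM p 0 = 0"
  unfolding skew_mult_def by simp

lemma SM_neg_right: "SM p (- q) = - SM p q"
  using SM_add_right[of p q "-q"] by (metis minus_unique right_minus SM_0_right)

lemma SM_diff_right: "SM p (q - r) = SM p q - SM p r"
  using SM_add_right[of p q "-r"] SM_neg_right[of p r] by simp

lemma tmul_SM: "TM (SM p q) = SM (TM p) q"
proof -
  let ?N = "degree p"
  let ?c = "\<lambda>i. lscal (if i = 0 then 0 else \<sigma> (coeff p (i - 1))) ((TM^^i) q)"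
  let ?d = "\<lambda>i. lscal (\<delta> (coeff p i)) ((TM^^i) q)"
  have "TM (SM p q) = (\<Sum>i\<le>?N. lscal (\<sigma> (coeff p i)) ((TM^^Suc i) q) + ?d i)"
    unfolding skew_mult_def by (simp add: tmul_sum tmul_lscal)
  also have "\<dots> = (\<Sum>i\<le>?N. lscal (\<sigma> (coeff p i)) ((TM^^Suc i) q)) + (\<Sum>i\<le>?N. ?d i)"
    by (simp add: sum.distrib)
  also have "(\<Sum>i\<le>?N. lscal (\<sigma> (coeff p i)) ((TM^^Suc i) q)) = (\<Sum>i\<le>Suc ?N. ?c i)"
    by (subst sum.atMost_Suc_shift) simp
  also have "(\<Sum>i\<le>?N. ?d i) = (\<Sum>i\<le>Suc ?N. ?d i)"
    by (simp add: coeff_eq_0)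
  also have "(\<Sum>i\<le>Suc ?N. ?c i) + (\<Sum>i\<le>Suc ?N. ?d i) = (\<Sum>i\<le>Suc ?N. lscal (coeff (TM p) i) ((TM^^i) q))"
    by (simp add: sum.distrib[symmetric] lscal_add2 coeff_tmul)
  also have "\<dots> = SM (TM p) q"
    by (rule SM_bound[symmetric]) (use degree_tmul[of p] in simp)
  finally show ?thesis .
qed

lemma tmul_pow_SM: "(TM^^i) (SM p q) = SM ((TM^^i) p) q"
  by (induction i) (simp_all add: tmul_SM)

lemma SM_assoc: "SM (SM p q) r = SM p (SM q r)"
proof -
  have "SM (SM p q) r = (\<Sum>i\<le>degree p. SM (lscal (coeff p i) ((TM^^i) q)) r)"
    unfolding skew_mult_def[of _ _ p q] by (rule SM_sum_left)
  also have "\<dots> = (\<Sum>i\<le>degree p. lscal (coeff p i) ((TM^^i) (SM q r)))"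
    by (simp add: SM_lscal_left tmul_pow_SM)
  also have "\<dots> = SM p (SM q r)" unfolding skew_mult_def ..
  finally show ?thesis .
qed

lemma SM_const_left: "SM [:c:] p = lscal c p"
  unfolding skew_mult_def by simp

lemma tmul_pow_one: "(TM^^i) [:1:] = monom 1 i"
proof (induction i)
  case 0 then show ?case by (simp add: monom_0)
next
  case (Suc i) then show ?case
    by (auto intro!: poly_eqI simp: coeff_tmul)
qed

lemma SM_one_right: "SM p [:1:] = p"
proof (rule poly_eqI)
  fix n
  have e: "\<And>i. coeff p i * (if i = n then 1 else 0) = (if i = n then coeff p i else 0)" by simp
  show "coeff (SM p [:1:]) n = coeff p n"
    by (cases "n \<le> degree p") (auto simp: skew_mult_def tmul_pow_one coeff_sum e coeff_eq_0)
qed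

lemma coeff_SM_high:
  assumes "degree p + degree q \<le> k"
  shows "coeff (SM p q) k = (if k = degree p + degree q then lead_coeff p * (\<sigma>^^degree p) (lead_coeff q) else 0)"
proof -
  let ?n = "degree p"
  let ?f = "\<lambda>i. coeff p i * coeff ((TM^^i) q) k"
  have z: "?f i = 0" if "i < ?n" for i
  proof -
    have "degree ((TM^^i) q) < k" using degree_tmul_pow[of i q] that assms by linarith
    then show ?thesis by (simp add: coeff_eq_0)
  qed
  have "coeff (SM p q) k = (\<Sum>i\<le>?n. ?f i)" by (simp add: skew_mult_def coeff_sum)
  also have "{..?n} = insert ?n {..<?n}" by auto
  also have "(\<Sum>i\<in>insert ?n {..<?n}. ?f i) = ?f ?n"
    using z by (simp add: sum.neutral del: mult_eq_0_iff)
  also have "?f ?n = (if k = degree p + degree q then lead_coeff p * (\<sigma>^^degree p) (lead_coeff q) else 0)"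
  proof (cases "k = degree p + degree q")
    case True then show ?thesis using coeff_tmul_pow_top[of ?n q] by (simp add: add.commute)
  next
    case False
    then have "degree ((TM^^?n) q) < k" using degree_tmul_pow[of ?n q] assms by linarith
    then show ?thesis using False by (simp add: coeff_eq_0)
  qed
  finally show ?thesis .
qed

lemma degree_SM:
  assumes "p \<noteq> 0" "q \<noteq> 0"
  shows "degree (SM p q) = degree p + degree q" and "SM p q \<noteq> 0"
proof -
  have lc: "lead_coeff p * (\<sigma>^^degree p) (lead_coeff q) \<noteq> 0"
    using assms s_pow_inj0[of "degree p" "lead_coeff q"] by auto
  have c: "coeff (SM p q) (degree p + degree q) \<noteq> 0"
    using coeff_SM_high[of p q "degree p + degree q"] lc by simp
  have "degree (SM p q) \<le> degree p + degree q"
    by (rule degree_le) (auto simp: coeff_SM_high)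
  moreover have "degree p + degree q \<le> degree (SM p q)" using c by (rule le_degree)
  ultimately show "degree (SM p q) = degree p + degree q" by simp
  show "SM p q \<noteq> 0" using c by auto
qed

lemma SM_eq_0_iff: "SM p q = 0 \<longleftrightarrow> p = 0 \<or> q = 0"
  using degree_SM(2)[of p q] by auto

lemma SM_cancel_left: "p \<noteq> 0 \<Longrightarrow> SM p q = SM p r \<Longrightarrow> q = r"
  using SM_diff_right[of p q r] SM_eq_0_iff[of p "q - r"] by simp

lemma unit_degree: "skew_unit \<sigma> \<delta> A \<Longrightarrow> degree A = 0"
proof -
  assume "skew_unit \<sigma> \<delta> A"
  then obtain B where "SM A B = [:1:]" unfolding skew_unit_def by blast
  moreover then have "A \<noteq> 0" "B \<noteq> 0" by auto
  ultimately show ?thesis using degree_SM(1)[of A B] by simp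
qed

definition Ta :: "'a \<Rightarrow> 'a \<Rightarrow> 'a" where "Ta a x = \<sigma> x * a + \<delta> x"
definition Lop :: "'a \<Rightarrow> 'a poly \<Rightarrow> 'a \<Rightarrow> 'a" where
  "Lop a F b = (\<Sum>i\<le>degree F. coeff F i * (Ta a ^^ i) b)"

lemma Ta_add: "Ta a (x + y) = Ta a x + Ta a y"
  unfolding Ta_def by (simp add: s_add d_add algebra_simps)
lemma Ta_0[simp]: "Ta a 0 = 0" unfolding Ta_def by simp
lemma Ta_mult: "Ta a (c * x) = \<sigma> c * Ta a x + \<delta> c * x"
  unfolding Ta_def by (simp add: s_mult d_mult algebra_simps)
lemma Ta_sum: "Ta a (sum f A) = (\<Sum>x\<in>A. Ta a (f x))"
  by (induction A rule: infinite_finite_induct) (simp_all add: Ta_add)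
lemma Ta_pow_add: "(Ta a ^^ i) (x + y) = (Ta a ^^ i) x + (Ta a ^^ i) y"
  by (induction i) (simp_all add: Ta_add)
lemma Ta_pow_0[simp]: "(Ta a ^^ i) 0 = 0"
  by (induction i) simp_all

lemma Lop_bound: "degree F \<le> N \<Longrightarrow> Lop a F b = (\<Sum>i\<le>N. coeff F i * (Ta a ^^ i) b)"
  unfolding Lop_def by (rule sym, rule sum_bound) (auto simp: coeff_eq_0)

lemma Lop_add_poly: "Lop a (F + G) b = Lop a F b + Lop a G b"
proof -
  let ?N = "max (degree F) (degree G)"
  have "Lop a (F + G) b = (\<Sum>i\<le>?N. coeff (F + G) i * (Ta a ^^ i) b)"
    by (rule Lop_bound) (rule degree_add_le_max)
  also have "\<dots> = (\<Sum>i\<le>?N. coeff F i * (Ta a ^^ i) b) + (\<Sum>i\<le>?N. coeff G i * (Ta a ^^ i) b)"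
    by (simp add: distrib_right sum.distrib)
  also have "\<dots> = Lop a F b + Lop a G b"
    using Lop_bound[of F ?N a b] Lop_bound[of G ?N a b] by simp
  finally show ?thesis .
qed

lemma Lop_0_poly[simp]: "Lop a 0 b = 0" unfolding Lop_def by simp

lemma Lop_lscal: "Lop a (lscal c F) b = c * Lop a F b"
proof -
  have "Lop a (lscal c F) b = (\<Sum>i\<le>degree F. coeff (lscal c F) i * (Ta a ^^ i) b)"
    by (rule Lop_bound) (rule degree_lscal)
  then show ?thesis by (simp add: Lop_def sum_distrib_left mult.assoc)
qed

lemma Lop_sum_poly: "Lop a (sum f A) b = (\<Sum>x\<in>A. Lop a (f x) b)"
  by (induction A rule: infinite_finite_induct) (simp_all add: Lop_add_poly)

lemma Lop_tmul: "Lop a (TM F) b = Ta a (Lop a F b)"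
proof -
  let ?N = "degree F"
  let ?c = "\<lambda>i. (if i = 0 then 0 else \<sigma> (coeff F (i - 1))) * (Ta a ^^ i) b"
  let ?d = "\<lambda>i. \<delta> (coeff F i) * (Ta a ^^ i) b"
  have "Ta a (Lop a F b) = (\<Sum>i\<le>?N. \<sigma> (coeff F i) * (Ta a ^^ Suc i) b + ?d i)"
    unfolding Lop_def by (simp add: Ta_sum Ta_mult)
  also have "\<dots> = (\<Sum>i\<le>?N. \<sigma> (coeff F i) * (Ta a ^^ Suc i) b) + (\<Sum>i\<le>?N. ?d i)"
    by (simp add: sum.distrib)
  also have "(\<Sum>i\<le>?N. \<sigma> (coeff F i) * (Ta a ^^ Suc i) b) = (\<Sum>i\<le>Suc ?N. ?c i)"
    by (subst sum.atMost_Suc_shift) simp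
  also have "(\<Sum>i\<le>?N. ?d i) = (\<Sum>i\<le>Suc ?N. ?d i)"
    by (simp add: coeff_eq_0)
  also have "(\<Sum>i\<le>Suc ?N. ?c i) + (\<Sum>i\<le>Suc ?N. ?d i) = (\<Sum>i\<le>Suc ?N. coeff (TM F) i * (Ta a ^^ i) b)"
    by (simp add: sum.distrib[symmetric] distrib_right coeff_tmul)
  also have "\<dots> = Lop a (TM F) b"
    by (rule Lop_bound[symmetric]) (use degree_tmul[of F] in simp)
  finally show ?thesis by simp
qed

lemma Lop_tmul_pow: "Lop a ((TM^^i) F) b = (Ta a ^^ i) (Lop a F b)"
  by (induction i) (simp_all add: Lop_tmul)

lemma Lop_SM: "Lop a (SM G H) b = Lop a G (Lop a H b)"
  unfolding skew_mult_def[of _ _ G H] Lop_def[of a G]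
  by (simp add: Lop_sum_poly Lop_lscal Lop_tmul_pow)

lemma Lop_add: "Lop a F (x + y) = Lop a F x + Lop a F y"
  unfolding Lop_def by (simp add: Ta_pow_add distrib_left sum.distrib)
lemma Lop_0[simp]: "Lop a F 0 = 0"
  unfolding Lop_def by simp
lemma Lop_neg: "Lop a F (- x) = - Lop a F x"
  using Lop_add[of a F x "-x"] by (metis minus_unique right_minus Lop_0)
lemma Lop_diff: "Lop a F (x - y) = Lop a F x - Lop a F y"
  using Lop_add[of a F x "-y"] Lop_neg[of a F y] by simp

lemma Lop_const: "Lop a [:c:] b = c * b"
  unfolding Lop_def by simp
lemma Lop_lin: "Lop a [:-z, 1:] b = - (z * b) + Ta a b"
  unfolding Lop_def by simp

definition Cs :: "'a \<Rightarrow> 'a set" where "Cs a = {c. \<sigma> c * a + \<delta> c = a * c}"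

lemma Ta_Cs: "c \<in> Cs a \<Longrightarrow> Ta a (x * c) = Ta a x * c"
proof -
  assume "c \<in> Cs a"
  then have h: "\<sigma> c * a + \<delta> c = a * c" unfolding Cs_def by simp
  have "Ta a (x * c) = \<sigma> x * (\<sigma> c * a + \<delta> c) + \<delta> x * c"
    unfolding Ta_def by (simp add: s_mult d_mult algebra_simps)
  also have "\<dots> = Ta a x * c" unfolding h Ta_def by (simp add: algebra_simps)
  finally show ?thesis .
qed
lemma Ta_pow_Cs: "c \<in> Cs a \<Longrightarrow> (Ta a ^^ i) (x * c) = (Ta a ^^ i) x * c"
  by (induction i) (simp_all add: Ta_Cs)
lemma Lop_Cs: "c \<in> Cs a \<Longrightarrow> Lop a F (x * c) = Lop a F x * c"
  unfolding Lop_def by (simp add: Ta_pow_Cs sum_distrib_right mult.assoc)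

lemma sd_act_Ta: "b \<noteq> 0 \<Longrightarrow> sd_act \<sigma> \<delta> b a = Ta a b * inverse b"
  unfolding sd_act_def Ta_def by (simp add: distrib_right)

lemma Ta_pow_shift:
  assumes "b \<noteq> 0"
  shows "(Ta a ^^ i) b = (Ta (sd_act \<sigma> \<delta> b a) ^^ i) 1 * b"
proof (induction i)
  case (Suc i)
  let ?z = "sd_act \<sigma> \<delta> b a"
  let ?x = "(Ta ?z ^^ i) 1"
  have zb: "?z * b = Ta a b" using assms by (simp add: sd_act_Ta mult.assoc)
  have "(Ta a ^^ Suc i) b = Ta a (?x * b)" using Suc by simp
  also have "\<dots> = \<sigma> ?x * Ta a b + \<delta> ?x * b" by (rule Ta_mult)
  also have "\<dots> = (\<sigma> ?x * ?z + \<delta> ?x) * b" using zb by (simp add: distrib_right mult.assoc)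
  also have "\<dots> = (Ta ?z ^^ Suc i) 1 * b" by (simp add: Ta_def)
  finally show ?case .
qed simp

lemma Lop_shift: "b \<noteq> 0 \<Longrightarrow> Lop a F b = Lop (sd_act \<sigma> \<delta> b a) F 1 * b"
  unfolding Lop_def by (simp add: Ta_pow_shift[where b=b and a=a] sum_distrib_right mult.assoc)

lemma lscal_diff: "lscal c (p - q) = lscal c p - lscal c q"
  by (rule poly_eqI) (simp add: algebra_simps)
lemma const_sum: "[:sum f A:] = (\<Sum>x\<in>A. [:f x:])"
  by (rule poly_eqI) (auto simp: coeff_sum coeff_pCons')

lemma grp_aux: "(x::'b::ab_group_add) = c + A \<Longrightarrow> c - d = B \<Longrightarrow> x - d = A + B"
  by (simp add: algebra_simps)

lemma eval_exists_pow: "\<exists>Q. (TM^^i) [:1:] - [:(Ta z ^^ i) 1:] = SM Q [:-z, 1:]"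
proof (induction i)
  case 0 show ?case by (rule exI[of _ 0]) simp
next
  case (Suc i)
  let ?X = "(TM^^i) [:1:]" and ?r = "(Ta z ^^ i) 1"
  from Suc obtain Q where Q: "?X - [:?r:] = SM Q [:-z, 1:]" by blast
  then have X: "?X = [:?r:] + SM Q [:-z, 1:]" by (simp add: algebra_simps)
  have "(TM^^Suc i) [:1:] = [:\<delta> ?r, \<sigma> ?r:] + SM (TM Q) [:-z, 1:]"
    by (simp add: X tmul_add tmul_const tmul_SM)
  moreover have "[:\<delta> ?r, \<sigma> ?r:] - [:(Ta z ^^ Suc i) 1:] = SM [:\<sigma> ?r:] [:-z, 1:]"
    by (rule poly_eqI) (auto simp: SM_const_left Ta_def coeff_pCons' algebra_simps)
  ultimately have "(TM^^Suc i) [:1:] - [:(Ta z ^^ Suc i) 1:] = SM (TM Q + [:\<sigma> ?r:]) [:-z, 1:]"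
    unfolding SM_add_left by (rule grp_aux)
  then show ?case by blast
qed

lemma eval_exists: "\<exists>Q. F - [:Lop z F 1:] = SM Q [:-z, 1:]"
proof -
  let ?L = "[:-z, 1:]"
  obtain Qf where Qf: "\<And>i. (TM^^i) [:1:] - [:(Ta z ^^ i) 1:] = SM (Qf i) ?L"
  proof -
    have "\<forall>i. \<exists>Q. (TM^^i) [:1:] - [:(Ta z ^^ i) 1:] = SM Q ?L" using eval_exists_pow by blast
    then show ?thesis using that by metis
  qed
  let ?Q = "\<Sum>i\<le>degree F. lscal (coeff F i) (Qf i)"
  have "SM ?Q ?L = (\<Sum>i\<le>degree F. lscal (coeff F i) ((TM^^i) [:1:] - [:(Ta z ^^ i) 1:]))"
    by (simp add: SM_sum_left SM_lscal_left Qf)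
  also have "\<dots> = SM F [:1:] - (\<Sum>i\<le>degree F. [:coeff F i * (Ta z ^^ i) 1:])"
    by (simp add: lscal_diff sum_subtractf skew_mult_def lscal_const)
  also have "\<dots> = F - [:Lop z F 1:]"
    by (simp add: SM_one_right Lop_def const_sum)
  finally show ?thesis by metis
qed

lemma eval_unique:
  assumes "P - [:r:] = SM Q [:-z, 1:]" "P - [:r':] = SM Q' [:-z, 1:]"
  shows "r = r'"
proof -
  have e: "[:r' - r:] = SM (Q - Q') [:-z, 1:]"
  proof -
    have "SM (Q - Q') [:-z, 1:] = (P - [:r:]) - (P - [:r':])" by (simp add: SM_diff_left assms)
    also have "\<dots> = [:r' - r:]" by simp
    finally show ?thesis ..
  qed
  have "Q - Q' = 0"
  proof (rule ccontr)
    assume "Q - Q' \<noteq> 0"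
    then have "degree (SM (Q - Q') [:-z, 1:]) = degree (Q - Q') + 1"
      using degree_SM(1)[of "Q - Q'" "[:-z, 1:]"] by simp
    then show False using e[symmetric] by simp
  qed
  then show ?thesis using e by simp
qed

lemma skew_eval_Lop: "skew_eval \<sigma> \<delta> F z = Lop z F 1"
  unfolding skew_eval_def
proof (rule the_equality)
  show "\<exists>Q. F - [:Lop z F 1:] = SM Q [:- z, 1:]" by (rule eval_exists)
next
  fix r assume "\<exists>Q. F - [:r:] = SM Q [:- z, 1:]"
  then show "r = Lop z F 1" using eval_exists[of F z] eval_unique by metis
qed

lemma Lop_eval: "b \<noteq> 0 \<Longrightarrow> Lop a F b = skew_eval \<sigma> \<delta> F (sd_act \<sigma> \<delta> b a) * b"
  unfolding skew_eval_Lop by (rule Lop_shift)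

lemma root_factor: "skew_eval \<sigma> \<delta> F z = 0 \<Longrightarrow> \<exists>Q. F = SM Q [:-z, 1:]"
  using eval_exists[of F z] by (simp add: skew_eval_Lop)

lemma sd_act_1[simp]: "sd_act \<sigma> \<delta> 1 a = a"
  unfolding sd_act_def by simp

lemma inv_cancel_aux: "(c::'a) \<noteq> 0 \<Longrightarrow> c * (inverse c * x) = x"
  by (simp add: mult.assoc[symmetric])

lemma sd_act_mult:
  assumes "b \<noteq> 0" "c \<noteq> 0"
  shows "sd_act \<sigma> \<delta> b (sd_act \<sigma> \<delta> c a) = sd_act \<sigma> \<delta> (b * c) a"
proof -
  have "sd_act \<sigma> \<delta> (b * c) a = \<sigma> b * \<sigma> c * a * (inverse c * inverse b) + (\<sigma> b * \<delta> c + \<delta> b * c) * (inverse c * inverse b)"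
    unfolding sd_act_def using assms by (simp add: s_mult d_mult nonzero_inverse_mult_distrib)
  also have "\<dots> = sd_act \<sigma> \<delta> b (sd_act \<sigma> \<delta> c a)"
    unfolding sd_act_def using assms by (simp add: algebra_simps inv_cancel_aux)
  finally show ?thesis by simp
qed

lemma Cs_iff: "c \<noteq> 0 \<Longrightarrow> c \<in> Cs a \<longleftrightarrow> sd_act \<sigma> \<delta> c a = a"
proof -
  assume c: "c \<noteq> 0"
  have "sd_act \<sigma> \<delta> c a = Ta a c * inverse c" using c by (rule sd_act_Ta)
  then have "sd_act \<sigma> \<delta> c a = a \<longleftrightarrow> Ta a c = a * c"
    using c by (metis mult.assoc nonzero_divide_eq_eq divide_inverse)
  then show ?thesis unfolding Cs_def Ta_def by simp
qed

lemma Cs_0[simp]: "0 \<in> Cs a" unfolding Cs_def by simp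
lemma Cs_1[simp]: "1 \<in> Cs a" unfolding Cs_def by simp
lemma Cs_add: "x \<in> Cs a \<Longrightarrow> y \<in> Cs a \<Longrightarrow> x + y \<in> Cs a"
  unfolding Cs_def by (simp add: s_add d_add algebra_simps)
lemma Cs_mult: "x \<in> Cs a \<Longrightarrow> y \<in> Cs a \<Longrightarrow> x * y \<in> Cs a"
proof -
  assume x: "x \<in> Cs a" and y: "y \<in> Cs a"
  have "\<sigma> (x * y) * a + \<delta> (x * y) = \<sigma> x * (\<sigma> y * a + \<delta> y) + \<delta> x * y"
    by (simp add: s_mult d_mult algebra_simps)
  also have "\<dots> = (\<sigma> x * a + \<delta> x) * y" using y unfolding Cs_def by (simp add: algebra_simps)
  also have "\<dots> = a * (x * y)" using x unfolding Cs_def by (simp add: mult.assoc)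
  finally show ?thesis unfolding Cs_def by simp
qed
lemma Cs_neg1: "-1 \<in> Cs a" unfolding Cs_def by (simp add: s_neg d_neg)
lemma Cs_neg: "x \<in> Cs a \<Longrightarrow> - x \<in> Cs a"
  using Cs_mult[OF Cs_neg1] by fastforce
lemma Cs_inv: "x \<in> Cs a \<Longrightarrow> inverse x \<in> Cs a"
proof (cases "x = 0")
  case False
  assume "x \<in> Cs a"
  then have "sd_act \<sigma> \<delta> x a = a" using False Cs_iff by blast
  then have "sd_act \<sigma> \<delta> (inverse x) a = sd_act \<sigma> \<delta> (inverse x * x) a"
    using sd_act_mult[of "inverse x" x a] False by simp
  then show ?thesis using False Cs_iff[of "inverse x" a] by simp
qed simp

lemma same_act:
  assumes "x \<noteq> 0" "y \<noteq> 0" "sd_act \<sigma> \<delta> x a = sd_act \<sigma> \<delta> y a"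
  shows "inverse y * x \<in> Cs a" "x = y * (inverse y * x)"
proof -
  have "sd_act \<sigma> \<delta> (inverse y * x) a = sd_act \<sigma> \<delta> (inverse y) (sd_act \<sigma> \<delta> y a)"
    using assms sd_act_mult[of "inverse y" x a] by simp
  also have "\<dots> = a" using assms sd_act_mult[of "inverse y" y a] by simp
  finally show "inverse y * x \<in> Cs a" using assms Cs_iff[of "inverse y * x" a] by simp
  show "x = y * (inverse y * x)" using assms by (simp add: inv_cancel_aux)
qed

lemma lin_kernel: "Lop a [:-z, 1:] x = 0 \<Longrightarrow> x \<noteq> 0 \<Longrightarrow> sd_act \<sigma> \<delta> x a = z"
  using sd_act_Ta[of x a] by (simp add: Lop_lin eq_neg_iff_add_eq_0[symmetric] add.commute mult.assoc)

lemma Lop_sum_arg: "Lop a F (sum f A) = (\<Sum>x\<in>A. Lop a F (f x))"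
  by (induction A rule: infinite_finite_induct) (simp_all add: Lop_add)

definition indep :: "'a \<Rightarrow> nat \<Rightarrow> (nat \<Rightarrow> 'a) \<Rightarrow> bool" where
  "indep a k b \<longleftrightarrow> (\<forall>\<gamma>. (\<forall>i<k. \<gamma> i \<in> Cs a) \<and> (\<Sum>i<k. b i * \<gamma> i) = 0 \<longrightarrow> (\<forall>i<k. \<gamma> i = 0))"

lemma indep_D: "indep a k b \<Longrightarrow> (\<And>j. j < k \<Longrightarrow> g j \<in> Cs a) \<Longrightarrow> (\<Sum>i<k. b i * g i) = 0 \<Longrightarrow> m < k \<Longrightarrow> g m = 0"
  unfolding indep_def by blast

lemma dim_bound:
  "F \<noteq> 0 \<Longrightarrow> indep a k b \<Longrightarrow> (\<forall>i<k. Lop a F (b i) = 0) \<Longrightarrow> k \<le> degree F"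
proof (induction k arbitrary: F b)
  case 0 then show ?case by simp
next
  case (Suc k)
  have b0: "b 0 \<noteq> 0"
  proof
    assume "b 0 = 0"
    let ?g = "\<lambda>i. if i = 0 then (1::'a) else 0"
    have hs: "(\<Sum>i<Suc k. b i * ?g i) = 0" using \<open>b 0 = 0\<close> by (subst sum.lessThan_Suc_shift) simp
    have gC: "\<And>j. j < Suc k \<Longrightarrow> ?g j \<in> Cs a" by simp
    have "?g 0 = 0" using indep_D[where g="?g" and m=0, OF Suc.prems(2) gC hs] by simp
    then show False by simp
  qed
  define z where "z = sd_act \<sigma> \<delta> (b 0) a"
  have "skew_eval \<sigma> \<delta> F z * b 0 = 0" using Suc.prems(3) Lop_eval[OF b0, of a F] z_def by simp
  then have "skew_eval \<sigma> \<delta> F z = 0" using b0 by simp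
  then obtain G where G: "F = SM G [:-z, 1:]" using root_factor by blast
  then have G0: "G \<noteq> 0" using Suc.prems(1) by auto
  have dF: "degree F = degree G + 1" using G degree_SM(1)[OF G0, of "[:-z, 1:]"] by simp
  define c where "c i = Lop a [:-z, 1:] (b (Suc i))" for i
  have cz: "\<forall>i<k. Lop a G (c i) = 0"
    using Suc.prems(3) by (simp add: c_def G Lop_SM[symmetric])
  have ci: "indep a k c"
    unfolding indep_def
  proof (rule allI, rule impI)
    fix \<gamma> assume h: "(\<forall>i<k. \<gamma> i \<in> Cs a) \<and> (\<Sum>i<k. c i * \<gamma> i) = 0"
    define x where "x = (\<Sum>i<k. b (Suc i) * \<gamma> i)"
    have "Lop a [:-z, 1:] x = (\<Sum>i<k. c i * \<gamma> i)"
      unfolding x_def c_def using h by (simp add: Lop_sum_arg Lop_Cs)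
    then have Lx: "Lop a [:-z, 1:] x = 0" using h by simp
    obtain g where g: "g \<in> Cs a" "x = b 0 * g"
    proof (cases "x = 0")
      case True then show ?thesis using that[of 0] by simp
    next
      case False
      then have "sd_act \<sigma> \<delta> x a = sd_act \<sigma> \<delta> (b 0) a" using lin_kernel[OF Lx] z_def by simp
      then show ?thesis using same_act[OF False b0] that by blast
    qed
    define \<gamma>' where "\<gamma>' i = (if i = 0 then - g else \<gamma> (i - 1))" for i
    have "(\<Sum>i<Suc k. b i * \<gamma>' i) = - (b 0 * g) + x"
      unfolding x_def \<gamma>'_def by (subst sum.lessThan_Suc_shift) simp
    then have s0: "(\<Sum>i<Suc k. b i * \<gamma>' i) = 0" using g by simp
    have gc: "\<And>i. i < Suc k \<Longrightarrow> \<gamma>' i \<in> Cs a"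
      unfolding \<gamma>'_def using h g Cs_neg by auto
    show "\<forall>i<k. \<gamma> i = 0"
    proof (intro allI impI)
      fix i assume "i < k"
      then have "\<gamma>' (Suc i) = 0" using indep_D[OF Suc.prems(2) gc s0, where m="Suc i"] by simp
      then show "\<gamma> i = 0" unfolding \<gamma>'_def by simp
    qed
  qed
  have "k \<le> degree G" using Suc.IH[OF G0 ci cz] .
  then show ?case using dF by simp
qed

lemma Lop_surj:
  assumes M: "M \<noteq> 0" "\<forall>b. Lop a M b = 0"
    and inj: "\<forall>b. b \<noteq> 0 \<longrightarrow> Lop a R b \<noteq> 0"
  shows "\<exists>b. Lop a R b = w"
proof -
  define S where "S = {k. \<exists>b. indep a k b}"
  have Sb: "S \<subseteq> {..degree M}"
    unfolding S_def using dim_bound[OF M(1)] M(2) by auto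
  then have fS: "finite S" by (rule finite_subset) simp
  have "0 \<in> S" unfolding S_def indep_def by simp
  define n where "n = Max S"
  have "n \<in> S" unfolding n_def using fS \<open>0 \<in> S\<close> by (intro Max_in) auto
  then obtain \<beta> where \<beta>: "indep a n \<beta>" unfolding S_def by blast
  have nS: "Suc n \<notin> S" using Max_ge[OF fS, of "Suc n"] n_def by auto
  have span: "\<exists>\<gamma>. (\<forall>i<n. \<gamma> i \<in> Cs a) \<and> v = (\<Sum>i<n. \<beta>' i * \<gamma> i)" if ind: "indep a n \<beta>'" for \<beta>' v
  proof -
    define b' where "b' = \<beta>'(n := v)"
    have "\<not> indep a (Suc n) b'" using nS unfolding S_def by blast
    then obtain g where g: "\<forall>i<Suc n. g i \<in> Cs a" "(\<Sum>i<Suc n. b' i * g i) = 0" "\<exists>j<Suc n. g j \<noteq> 0"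
      unfolding indep_def by blast
    have "(\<Sum>i<Suc n. b' i * g i) = (\<Sum>i<n. \<beta>' i * g i) + v * g n"
      unfolding b'_def by simp
    then have e: "(\<Sum>i<n. \<beta>' i * g i) + v * g n = 0" using g(2) by simp
    have gn: "g n \<noteq> 0"
    proof
      assume "g n = 0"
      then have "(\<Sum>i<n. \<beta>' i * g i) = 0" using e by simp
      then have "\<forall>i<n. g i = 0" using ind g(1) unfolding indep_def by auto
      then show False using g(3) \<open>g n = 0\<close> less_Suc_eq by auto
    qed
    define \<gamma> where "\<gamma> i = - g i * inverse (g n)" for i
    have "v * g n = - (\<Sum>i<n. \<beta>' i * g i)" using e by (simp add: eq_neg_iff_add_eq_0 add.commute)
    then have "v = - (\<Sum>i<n. \<beta>' i * g i) * inverse (g n)"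
      using gn by (metis mult.assoc right_inverse mult_1_right)
    also have "\<dots> = (\<Sum>i<n. \<beta>' i * \<gamma> i)"
      unfolding \<gamma>_def by (simp add: sum_distrib_right mult.assoc sum_negf)
    finally have "v = (\<Sum>i<n. \<beta>' i * \<gamma> i)" .
    moreover have "\<forall>i<n. \<gamma> i \<in> Cs a"
      unfolding \<gamma>_def using g(1) by (auto intro!: Cs_mult Cs_neg Cs_inv)
    ultimately show ?thesis by blast
  qed
  have indL: "indep a n (\<lambda>i. Lop a R (\<beta> i))"
    unfolding indep_def
  proof (rule allI, rule impI)
    fix \<gamma> assume h: "(\<forall>i<n. \<gamma> i \<in> Cs a) \<and> (\<Sum>i<n. Lop a R (\<beta> i) * \<gamma> i) = 0"
    then have "Lop a R (\<Sum>i<n. \<beta> i * \<gamma> i) = 0" by (simp add: Lop_sum_arg Lop_Cs)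
    then have "(\<Sum>i<n. \<beta> i * \<gamma> i) = 0" using inj by blast
    then show "\<forall>i<n. \<gamma> i = 0" using \<beta> h unfolding indep_def by blast
  qed
  obtain \<gamma> where "\<forall>i<n. \<gamma> i \<in> Cs a" "w = (\<Sum>i<n. Lop a R (\<beta> i) * \<gamma> i)"
    using span[OF indL] by blast
  then have "w = Lop a R (\<Sum>i<n. \<beta> i * \<gamma> i)" by (simp add: Lop_sum_arg Lop_Cs)
  then show ?thesis by blast
qed

lemma conj_classE: "w \<in> conj_class \<sigma> \<delta> a \<Longrightarrow> \<exists>b. b \<noteq> 0 \<and> w = sd_act \<sigma> \<delta> b a"
  unfolding conj_class_def by auto

lemma skew_inv_main:
  assumes M: "M \<noteq> 0" "\<forall>c\<in>conj_class \<sigma> \<delta> a. skew_eval \<sigma> \<delta> M c = 0"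
    and nz: "\<forall>c\<in>conj_class \<sigma> \<delta> a. skew_eval \<sigma> \<delta> R c \<noteq> 0"
  shows "skew_invertible_on \<sigma> \<delta> (conj_class \<sigma> \<delta> a) (\<lambda>c. skew_eval \<sigma> \<delta> R c)"
proof -
  let ?D = "conj_class \<sigma> \<delta> a"
  let ?f = "\<lambda>c. skew_eval \<sigma> \<delta> R c"
  let ?phi = "\<lambda>z. sd_act \<sigma> \<delta> (?f z) z"
  have inD: "sd_act \<sigma> \<delta> b a \<in> ?D" if "b \<noteq> 0" for b
    unfolding conj_class_def using that by blast
  have LM: "\<forall>b. Lop a M b = 0"
  proof
    fix b show "Lop a M b = 0"
    proof (cases "b = 0")
      case False then show ?thesis using Lop_eval[OF False, of a M] M(2) inD[OF False] by simp
    qed simp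
  qed
  have LR: "Lop a R b = ?f (sd_act \<sigma> \<delta> b a) * b" if "b \<noteq> 0" for b
    using Lop_eval[OF that] .
  have inj: "\<forall>b. b \<noteq> 0 \<longrightarrow> Lop a R b \<noteq> 0"
    using LR nz inD by auto
  have phiL: "?phi (sd_act \<sigma> \<delta> b a) = sd_act \<sigma> \<delta> (Lop a R b) a" if "b \<noteq> 0" for b
    using sd_act_mult[of "?f (sd_act \<sigma> \<delta> b a)" b a] that LR[OF that] nz inD[OF that] by simp
  have surj: "\<exists>z\<in>?D. ?phi z = w" if "w \<in> ?D" for w
  proof -
    obtain b' where b': "b' \<noteq> 0" "w = sd_act \<sigma> \<delta> b' a" using conj_classE[OF \<open>w \<in> ?D\<close>] by blast
    obtain b where b: "Lop a R b = b'" using Lop_surj[OF M(1) LM inj] by blast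
    then have "b \<noteq> 0" using b' by auto
    then have "?phi (sd_act \<sigma> \<delta> b a) = w" using phiL[OF \<open>b \<noteq> 0\<close>] b b'(2) by simp
    then show ?thesis using inD[OF \<open>b \<noteq> 0\<close>] by blast
  qed
  have uniq: "z1 = z2" if hz: "z1 \<in> ?D" "z2 \<in> ?D" "?phi z1 = ?phi z2" for z1 z2
  proof -
    obtain b1 where b1: "b1 \<noteq> 0" "z1 = sd_act \<sigma> \<delta> b1 a" using conj_classE[OF hz(1)] by blast
    obtain b2 where b2: "b2 \<noteq> 0" "z2 = sd_act \<sigma> \<delta> b2 a" using conj_classE[OF hz(2)] by blast
    have e: "sd_act \<sigma> \<delta> (Lop a R b1) a = sd_act \<sigma> \<delta> (Lop a R b2) a"
      using hz(3) phiL b1 b2 by simp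
    have n1: "Lop a R b1 \<noteq> 0" "Lop a R b2 \<noteq> 0" using inj b1 b2 by auto
    define \<gamma> where "\<gamma> = inverse (Lop a R b2) * Lop a R b1"
    have \<gamma>: "\<gamma> \<in> Cs a" "Lop a R b1 = Lop a R b2 * \<gamma>"
      using same_act[OF n1 e] unfolding \<gamma>_def by auto
    then have "Lop a R (b1 - b2 * \<gamma>) = 0" by (simp add: Lop_diff Lop_Cs)
    then have bb: "b1 = b2 * \<gamma>" using inj eq_iff_diff_eq_0 by blast
    then have "\<gamma> \<noteq> 0" using b1 by auto
    then have "sd_act \<sigma> \<delta> \<gamma> a = a" using Cs_iff[OF \<open>\<gamma> \<noteq> 0\<close>] \<gamma>(1) by simp
    then show ?thesis using b1 b2 bb sd_act_mult[of b2 \<gamma> a] \<open>\<gamma> \<noteq> 0\<close> by simp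
  qed
  define g where "g w = inverse (?f (THE z. z \<in> ?D \<and> ?phi z = w))" for w
  have gphi: "g (?phi z) = inverse (?f z)" if "z \<in> ?D" for z
  proof -
    have "(THE z'. z' \<in> ?D \<and> ?phi z' = ?phi z) = z"
    proof (rule the_equality)
      show "z \<in> ?D \<and> ?phi z = ?phi z" using that by simp
    next
      fix z' assume h: "z' \<in> ?D \<and> ?phi z' = ?phi z"
      show "z' = z" by (rule uniq[OF conjunct1[OF h] that conjunct2[OF h]])
    qed
    then show ?thesis unfolding g_def by simp
  qed
  show ?thesis
    unfolding skew_invertible_on_def
  proof (intro exI ballI conjI)
    fix z assume z: "z \<in> ?D"
    show "skew_prod \<sigma> \<delta> g ?f z = 1"
      unfolding skew_prod_def using z nz gphi[OF z] by simp
    obtain y where y: "y \<in> ?D" "?phi y = z" using surj[OF z] by blast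
    have gz: "g z = inverse (?f y)" using gphi[OF y(1)] y(2) by simp
    have fy: "?f y \<noteq> 0" using nz y by auto
    have "sd_act \<sigma> \<delta> (g z) z = y"
      using gz y(2) sd_act_mult[of "inverse (?f y)" "?f y" y] fy by simp
    then show "skew_prod \<sigma> \<delta> ?f g z = 1"
      unfolding skew_prod_def using gz fy by simp
  qed
qed

lemma no_root:
  assumes irr: "skew_irreducible \<sigma> \<delta> P" and deg: "degree P > 1"
  shows "skew_eval \<sigma> \<delta> P z \<noteq> 0"
proof
  assume "skew_eval \<sigma> \<delta> P z = 0"
  then obtain Q where Q: "P = SM Q [:-z, 1:]" using root_factor by blast
  have P0: "P \<noteq> 0" using irr unfolding skew_irreducible_def by blast
  then have Q0: "Q \<noteq> 0" using Q by auto
  have "degree P = degree Q + 1" using Q degree_SM(1)[OF Q0, of "[:-z, 1:]"] by simp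
  then have dQ: "degree Q \<noteq> 0" using deg by simp
  have "skew_unit \<sigma> \<delta> Q \<or> skew_unit \<sigma> \<delta> [:-z, 1:]"
    using irr Q unfolding skew_irreducible_def by blast
  then show False using unit_degree dQ by fastforce
qed

lemma rep_lemma:
  assumes "frac_eq \<sigma> \<delta> (R, S) (P, [:1:])"
  shows "R = SM S P"
proof -
  obtain U V where UV: "U \<noteq> 0" "V \<noteq> 0" "SM U R = SM V P" "SM U S = SM V [:1:]"
    using assms unfolding frac_eq_def by auto
  have "SM U R = SM (SM U S) P" using UV by (simp add: SM_one_right)
  also have "\<dots> = SM U (SM S P)" by (rule SM_assoc)
  finally show ?thesis using SM_cancel_left[OF UV(1)] by blast
qed

lemma main_frac:
  assumes alg: "\<forall>b. sd_algebraic_class \<sigma> \<delta> b" and irr: "skew_irreducible \<sigma> \<delta> P"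
    and deg: "degree P > 1"
  shows "frac_defined_at \<sigma> \<delta> (P, [:1:]) a"
proof -
  have P0: "P \<noteq> 0" using irr unfolding skew_irreducible_def by blast
  define c where "c = inverse (lead_coeff P)"
  have c0: "c \<noteq> 0" using P0 c_def by simp
  define R0 where "R0 = lscal c P"
  have cR0: "coeff R0 (degree P) = 1" unfolding R0_def c_def using P0 by simp
  have dR0: "degree R0 = degree P"
  proof (rule antisym)
    show "degree R0 \<le> degree P" unfolding R0_def by (rule degree_lscal)
    show "degree P \<le> degree R0" using cR0 by (intro le_degree) simp
  qed
  have lR0: "lead_coeff R0 = 1" using cR0 dR0 by simp
  have fR0: "frac_eq \<sigma> \<delta> (R0, [:c:]) (P, [:1:])"
    unfolding frac_eq_def
    by (rule exI[of _ "[:1:]"], rule exI[of _ "[:c:]"])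
       (simp add: c0 SM_const_left R0_def SM_one_right)
  have low: "degree P \<le> degree R'" if "lead_coeff R' = 1" "frac_eq \<sigma> \<delta> (R', S') (P, [:1:])" for R' S'
  proof -
    have R': "R' = SM S' P" using rep_lemma[OF that(2)] .
    then have "S' \<noteq> 0" using that(1) by auto
    then show ?thesis using R' degree_SM(1)[of S' P] P0 by simp
  qed
  have ex: "minimal_rep \<sigma> \<delta> (P, [:1:]) (R0, [:c:])"
    unfolding minimal_rep_def using lR0 fR0 low dR0 by auto
  have inv: "skew_invertible_on \<sigma> \<delta> (conj_class \<sigma> \<delta> a) (\<lambda>z. skew_eval \<sigma> \<delta> (fst RS) z)"
    if mr: "minimal_rep \<sigma> \<delta> (P, [:1:]) RS" for RS
  proof -
    obtain R S where RS: "RS = (R, S)" by (cases RS)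
    have m: "lead_coeff R = 1" "frac_eq \<sigma> \<delta> (R, S) (P, [:1:])" "degree R \<le> degree R0"
      using mr lR0 fR0 unfolding minimal_rep_def RS by auto
    have R: "R = SM S P" using rep_lemma[OF m(2)] .
    then have S0: "S \<noteq> 0" using m(1) by auto
    then have "degree S = 0" using R m(3) dR0 degree_SM(1)[OF S0 P0] by simp
    then obtain s where s: "S = [:s:]" by (rule degree_eq_zeroE)
    then have s0: "s \<noteq> 0" using S0 by simp
    have ev: "skew_eval \<sigma> \<delta> R z = s * skew_eval \<sigma> \<delta> P z" for z
      using R s by (simp add: SM_const_left skew_eval_Lop Lop_lscal)
    obtain M where M: "M \<noteq> 0" "\<forall>c\<in>conj_class \<sigma> \<delta> a. skew_eval \<sigma> \<delta> M c = 0"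
      using alg unfolding sd_algebraic_class_def by blast
    have nz: "\<forall>c\<in>conj_class \<sigma> \<delta> a. skew_eval \<sigma> \<delta> R c \<noteq> 0"
      using ev s0 no_root[OF irr deg] by simp
    show ?thesis using skew_inv_main[OF M nz] RS by simp
  qed
  show ?thesis unfolding frac_defined_at_def using ex inv by blast
qed

end

theorem corollary3p5:
  fixes \<sigma> \<delta> :: "'a::division_ring \<Rightarrow> 'a" and P :: "'a poly"
  assumes "ring_endo \<sigma>"
    and "sigma_derivation \<sigma> \<delta>"
    and "\<forall>b. sd_algebraic_class \<sigma> \<delta> b"
    and "skew_irreducible \<sigma> \<delta> P"
    and "degree P > 1"
  shows "\<forall>a. frac_defined_at \<sigma> \<delta> (P, [:1:]) a"
proof
  fix a
  interpret skewctx \<sigma> \<delta> using assms(1,2) by unfold_locales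
  show "frac_defined_at \<sigma> \<delta> (P, [:1:]) a" using main_frac assms(3-5) by blast
qed

end
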